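(* Let $N\ge 2$ and consider the synchronous-play slotted-ALOHA game among $N$ players in which player $i$ chooses a transmission (access) probability $q_i\in[0,1]$ and has net utility $$V_i(\underline{q})=C_i\log\gamma_i(\underline{q})+A_i\,\alpha_i(\underline{q}_{-i})\,\overline{\gamma}_{-i}(\underline{q})-M_i q_i,$$ where $\gamma_i(\underline{q})=q_i\prod_{j\ne i}(1-q_j)$, $\alpha_i(\underline{q}_{-i})=\prod_{j\ne i}(1-q_j)$, and $\overline{\gamma}_{-i}(\underline{q})=\frac{1}{N-1}\sum_{j\ne i}\gamma_j(\underline{q})$, with $C_i,M_i>0$ and $A_i\ge 0$. Suppose all players have the same normalized parameters $c:=C_i/M_i<1$ and $a:=A_i/M_i$. Then there is a symmetric Nash equilibrium $\underline{q}^*=q^*\underline{1}$ (where $\underline{1}$ is the all-ones vector in $\mathbb{R}^N$), where $0<q^*<1$ is a solution of $$f(q):=a q^2(1-q)^{2N-3}+q-c=0.$$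
   Context: $\underline{q}=(q_1,\dots,q_N)$ is the profile of access probabilities and $\underline{q}_{-i}$ is the profile of all players other than $i$. $\gamma_i$ is player $i$'s mean throughput (probability of a successful transmission by $i$ in a slot), $\alpha_i$ is player $i$'s dynamic altruism factor, and $\overline{\gamma}_{-i}$ is the mean throughput of the other players. A Nash equilibrium is a profile $\underline{q}^*$ such that for each $i$, $q_i^*$ maximizes $V_i(q_i;\underline{q}^*_{-i})$ over $q_i\in[0,1]$ (with $\log 0=-\infty$). *)

theory Defs
  imports Complex_Main "HOL-Library.Extended_Real"
begin

text \<open>Players are indexed by 0,...,N-1; a profile is a function q :: nat => real.\<close>

definition others :: "nat \<Rightarrow> nat \<Rightarrow> nat set" where
  "others N i = {0..<N} - {i}"

definition thr :: "nat \<Rightarrow> (nat \<Rightarrow> real) \<Rightarrow> nat \<Rightarrow> real" where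
  "thr N q i = q i * (\<Prod>j\<in>others N i. (1 - q j))"

definition altr :: "nat \<Rightarrow> (nat \<Rightarrow> real) \<Rightarrow> nat \<Rightarrow> real" where
  "altr N q i = (\<Prod>j\<in>others N i. (1 - q j))"

definition thr_others :: "nat \<Rightarrow> (nat \<Rightarrow> real) \<Rightarrow> nat \<Rightarrow> real" where
  "thr_others N q i = (\<Sum>j\<in>others N i. thr N q j) / (real N - 1)"

text \<open>Net utility, valued in the extended reals so that log 0 = -infinity.\<close>
definition utility :: "nat \<Rightarrow> (nat \<Rightarrow> real) \<Rightarrow> (nat \<Rightarrow> real) \<Rightarrow> (nat \<Rightarrow> real)
    \<Rightarrow> (nat \<Rightarrow> real) \<Rightarrow> nat \<Rightarrow> ereal" where
  "utility N C A M q i =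
     (if thr N q i = 0 then -\<infinity>
      else ereal (C i * ln (thr N q i) + A i * altr N q i * thr_others N q i - M i * q i))"

definition nash_eq :: "nat \<Rightarrow> (nat \<Rightarrow> real) \<Rightarrow> (nat \<Rightarrow> real) \<Rightarrow> (nat \<Rightarrow> real)
    \<Rightarrow> (nat \<Rightarrow> real) \<Rightarrow> bool" where
  "nash_eq N C A M q \<longleftrightarrow>
     (\<forall>j<N. 0 \<le> q j \<and> q j \<le> 1) \<and>
     (\<forall>i<N. \<forall>x\<in>{0..1}. utility N C A M (q(i := x)) i \<le> utility N C A M q i)"

end

theory Submission
  imports Defs
begin

lemma others_fin: "finite (others N i)" by (simp add: others_def)

lemma card_others: "i < N \<Longrightarrow> card (others N i) = N - 1"
  by (simp add: others_def)

lemma prod_self: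
  assumes "i < N"
  shows "(\<Prod>j\<in>others N i. (1 - ((\<lambda>_. q)(i:=x)) j)) = (1 - q)^(N-1)"
proof -
  have "(\<Prod>j\<in>others N i. (1 - ((\<lambda>_. q)(i:=x)) j)) = (\<Prod>j\<in>others N i. (1 - q))"
    by (rule prod.cong) (auto simp: others_def)
  then show ?thesis using card_others[OF assms] by simp
qed

lemma prod_other:
  assumes "i < N" "j \<in> others N i"
  shows "(\<Prod>k\<in>others N j. (1 - ((\<lambda>_. q)(i:=x)) k)) = (1 - x) * (1 - q)^(N-2)"
proof -
  have jN: "j < N" "j \<noteq> i" using assms by (auto simp: others_def)
  have eq: "others N j = insert i ({0..<N} - {i, j})" using assms jN by (auto simp: others_def)
  have c: "card ({0..<N} - {i, j}) = N - 2" using assms jN by (simp add: card_Diff_subset)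
  have "(\<Prod>k\<in>{0..<N} - {i, j}. (1 - ((\<lambda>_. q)(i:=x)) k)) = (\<Prod>k\<in>{0..<N} - {i, j}. (1 - q))"
    by (rule prod.cong) auto
  also have "\<dots> = (1 - q)^(N-2)" using c by simp
  finally have r: "(\<Prod>k\<in>{0..<N} - {i, j}. (1 - ((\<lambda>_. q)(i:=x)) k)) = (1 - q)^(N-2)" .
  show ?thesis unfolding eq by (subst prod.insert) (auto simp: r c)
qed

lemma thr_self: "i < N \<Longrightarrow> thr N ((\<lambda>_. q)(i:=x)) i = x * (1 - q)^(N-1)"
  unfolding thr_def by (subst prod_self) auto

lemma altr_self: "i < N \<Longrightarrow> altr N ((\<lambda>_. q)(i:=x)) i = (1 - q)^(N-1)"
  unfolding altr_def by (subst prod_self) auto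

lemma thr_others_self:
  assumes "i < N" "N \<ge> 2"
  shows "thr_others N ((\<lambda>_. q)(i:=x)) i = q * (1 - x) * (1 - q)^(N-2)"
proof -
  have "(\<Sum>j\<in>others N i. thr N ((\<lambda>_. q)(i:=x)) j) = (\<Sum>j\<in>others N i. q * ((1 - x) * (1 - q)^(N-2)))"
  proof (rule sum.cong)
    fix j assume j: "j \<in> others N i"
    then have "j \<noteq> i" by (auto simp: others_def)
    then show "thr N ((\<lambda>_. q)(i:=x)) j = q * ((1 - x) * (1 - q)^(N-2))"
      unfolding thr_def prod_other[OF assms(1) j] using \<open>j \<noteq> i\<close> by simp
  qed simp
  also have "\<dots> = real (N - 1) * (q * ((1 - x) * (1 - q)^(N-2)))"
    using card_others[OF assms(1)] by simp
  finally show ?thesis unfolding thr_others_def using assms by (simp add: of_nat_diff)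
qed

lemma util_formula:
  assumes "i < N" "N \<ge> 2" "thr N ((\<lambda>_. q)(i:=x)) i \<noteq> 0"
  shows "utility N C A M ((\<lambda>_. q)(i:=x)) i =
     ereal (C i * ln (x * (1 - q)^(N-1)) + A i * q * (1 - x) * (1 - q)^(2*N-3) - M i * x)"
proof -
  have "(1 - q)^(N-1) * (q * (1 - x) * (1 - q)^(N-2)) = q * (1 - x) * (1 - q)^(2*N-3)"
  proof -
    have "2*N-3 = (N-1) + (N-2)" using assms by simp
    then show ?thesis by (simp add: power_add)
  qed
  then show ?thesis using assms unfolding utility_def
    by (simp add: thr_self altr_self thr_others_self mult.assoc)
qed

theorem proposition1:
  fixes N :: nat and C A M :: "nat \<Rightarrow> real" and a c :: real
  assumes "N \<ge> 2"
    and "\<forall>i<N. C i > 0 \<and> M i > 0 \<and> A i \<ge> 0"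
    and "\<forall>i<N. C i / M i = c \<and> A i / M i = a"
    and "c < 1"
  shows "\<exists>q::real. 0 < q \<and> q < 1 \<and>
           a * q^2 * (1 - q)^(2*N - 3) + q - c = 0 \<and>
           nash_eq N C A M (\<lambda>_. q)"
proof -
  define f where "f q = a * q^2 * (1 - q)^(2*N - 3) + q - c" for q :: real
  have c0: "c > 0" using assms(2,3)[rule_format, of 0] assms(1) by auto
  have a0: "a \<ge> 0" using assms(2,3)[rule_format, of 0] assms(1) by auto
  have e: "2*N - 3 \<noteq> 0" using assms(1) by simp
  have f0: "f 0 < 0" using c0 by (simp add: f_def)
  have f1: "f 1 > 0" using assms(4) e by (simp add: f_def zero_power)
  have cont: "\<forall>x. 0 \<le> x \<and> x \<le> 1 \<longrightarrow> isCont f x" unfolding f_def by (intro allI impI) (intro continuous_intros)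
  obtain q where q: "0 \<le> q" "q \<le> 1" "f q = 0"
    using IVT[of f 0 0 1] f0 f1 cont by force
  have q0: "q > 0" using q f0 by (cases "q = 0") auto
  have q1: "q < 1" using q f1 by (cases "q = 1") auto
  define K where "K = (1 - q)^(2*N-3)"
  have Kpos: "K > 0" using q1 by (simp add: K_def)
  have nash: "nash_eq N C A M (\<lambda>_. q)"
    unfolding nash_eq_def
  proof (intro conjI allI impI ballI)
    fix j assume "j < N" then show "0 \<le> q" "q \<le> 1" using q by auto
  next
    fix i x assume i: "i < N" and x: "x \<in> {0..(1::real)}"
    have Ci: "C i > 0" "M i > 0" "A i \<ge> 0" using assms(2) i by auto
    have Cc: "C i = c * M i" "A i = a * M i" using assms(3) i Ci by (auto simp: field_simps)
    have qq: "(\<lambda>_. q)(i := q) = (\<lambda>_. q)" by auto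
    have P: "(1 - q)^(N-1) > 0" using q1 by simp
    have tq: "thr N ((\<lambda>_. q)(i:=q)) i \<noteq> 0" unfolding thr_self[OF i] using mult_pos_pos[OF q0 P] by linarith
    have uq: "utility N C A M (\<lambda>_. q) i =
       ereal (C i * ln (q * (1 - q)^(N-1)) + A i * q * (1 - q) * K - M i * q)"
      using util_formula[OF i assms(1) tq] qq by (simp add: K_def)
    show "utility N C A M ((\<lambda>_. q)(i := x)) i \<le> utility N C A M (\<lambda>_. q) i"
    proof (cases "x = 0")
      case True
      then show ?thesis unfolding utility_def by (simp add: thr_self[OF i])
    next
      case False
      then have x0: "x > 0" using x by auto
      have tx: "thr N ((\<lambda>_. q)(i:=x)) i \<noteq> 0" unfolding thr_self[OF i] using mult_pos_pos[OF x0 P] by linarith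
      have ux: "utility N C A M ((\<lambda>_. q)(i := x)) i =
         ereal (C i * ln (x * (1 - q)^(N-1)) + A i * q * (1 - x) * K - M i * x)"
        using util_formula[OF i assms(1) tx] by (simp add: K_def)
      have lnx: "ln (x * (1 - q)^(N-1)) = ln x + ln ((1 - q)^(N-1))" using ln_mult_pos[OF x0 P] .
      have lnq: "ln (q * (1 - q)^(N-1)) = ln q + ln ((1 - q)^(N-1))" using ln_mult_pos[OF q0 P] .
      have ll: "ln (x / q) \<le> x / q - 1" using x0 q0 by (intro ln_le_minus_one) simp
      then have ll2: "ln x \<le> ln q + (x - q) / q" using x0 q0 by (simp add: ln_div diff_divide_distrib)
      have fq: "c = q + a * q^2 * K" using q(3) by (simp add: f_def K_def)
      have Cq: "C i = M i * q + A i * q^2 * K" using fq Cc by (simp add: algebra_simps)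
      have "C i * ln x \<le> C i * (ln q + (x - q) / q)" using ll2 Ci by simp
      also have "C i * (ln q + (x - q) / q) = C i * ln q + (M i + A i * q * K) * (x - q)"
        using q0 by (simp add: Cq field_simps power2_eq_square)
      finally have "C i * ln x \<le> C i * ln q + (M i + A i * q * K) * (x - q)" .
      then have "C i * ln (x * (1 - q)^(N-1)) + A i * q * (1 - x) * K - M i * x
          \<le> C i * ln (q * (1 - q)^(N-1)) + A i * q * (1 - q) * K - M i * q"
        unfolding lnx lnq by (simp add: algebra_simps)
      then show ?thesis using ux uq by simp
    qed
  qed
  show ?thesis using q0 q1 q(3) nash by (auto simp: f_def)
qed

end
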